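(* Let $\gamma>1$ and let the pressure function of the ideal MHD equations be $$p(q)=(\gamma-1)\left(\mathcal{E}-\frac{(\rho u_x)^2+(\rho u_y)^2+(\rho u_z)^2}{2\rho}-\frac{1}{2}\left(B_x^2+B_y^2+B_z^2\right)\right)$$ for a state vector $q=(\rho,\rho u_x,\rho u_y,\rho u_z,\mathcal{E},B_x,B_y,B_z)\in\mathbb{R}^8$ with $\rho>0$. Fix a grid index $j$, a ratio $\lambda=\Delta t/\Delta x>0$, a state $q^n_j\in\mathbb{R}^8$, and vectors $\hat{\mathbf F}^{rk}_{j\pm\frac12},\hat{\mathbf f}_{j\pm\frac12}\in\mathbb{R}^8$. For $\overrightarrow{\theta}=(\theta_{j-\frac12},\theta_{j+\frac12})\in\mathbb{R}^2$ define $$q^{n+1}_j(\overrightarrow{\theta})=q^n_j-\lambda\left(\tilde{\mathbf F}_{j+\frac12}-\tilde{\mathbf F}_{j-\frac12}\right),\qquad \tilde{\mathbf F}_{j\pm\frac12}=\theta_{j\pm\frac12}\left(\hat{\mathbf F}^{rk}_{j\pm\frac12}-\hat{\mathbf f}_{j\pm\frac12}\right)+\hat{\mathbf f}_{j\pm\frac12}.$$ Let $S_{\rho,I_j}=[0,\Lambda^\rho_{-\frac12,I_j}]\times[0,\Lambda^\rho_{+\frac12,I_j}]$ be the rectangle defined in the context below. Then for every $\alpha\in[0,1]$ and every $\overrightarrow{\theta}^1,\overrightarrow{\theta}^2\in S_{\rho,I_j}$, $$p\left(q^{n+1}_j\left(\alpha\overrightarrow{\theta}^1+(1-\alpha)\overrightarrow{\theta}^2\right)\right)\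 \ge\ \alpha\, p\left(q^{n+1}_j\left(\overrightarrow{\theta}^1\right)\right)+(1-\alpha)\,p\left(q^{n+1}_j\left(\overrightarrow{\theta}^2\right)\right).$$
   Context: Setting: a finite difference scheme for the 1D ideal MHD equations $q_t+\mathbf f(q)_x=0$ on a uniform grid, where $\hat{\mathbf F}^{rk}_{j+\frac12}$ is a high-order (Runge–Kutta combined WENO) numerical flux and $\hat{\mathbf f}_{j+\frac12}$ is the first-order Lax–Friedrichs flux. Denote by $f^\rho_{j\pm\frac12}$ and $\hat f^\rho_{j\pm\frac12}$ the first (density) components of $\hat{\mathbf F}^{rk}_{j\pm\frac12}$ and $\hat{\mathbf f}_{j\pm\frac12}$, and let $\rho^n_j$ be the first component of $q^n_j$. Set $\Gamma_j=\rho^n_j-\lambda(\hat f^\rho_{j+\frac12}-\hat f^\rho_{j-\frac12})$ (the density of the first-order Lax–Friedrichs update) and let $\epsilon^{n+1}_\rho>0$ be a lower bound with $\Gamma_j\ge\epsilon^{n+1}_\rho$ (in the paper $\epsilon^{n+1}_\rho=\min(\min_j\Gamma_j,\epsilon_0)$ with $\epsilon_0=10^{-13}$, the Lax–Friedrichs densities being positive). Let $F_{j\pm\frac12}=f^\rho_{j\pm\frac12}-\hat f^\rho_{j\pm\frac12}$. The bounds $(\Lambda^\rho_{-\frac12,I_j},\Lambda^\rho_{+\frac12,I_j})$ are defined by: (i) if $F_{j-\frac12}\ge0$ and $F_{j+\frac12}\le0$: $(1,1)$; (ii) if $F_{j-\frac12}\ge0$ and $F_{j+\frac12}>0$: $\left(1,\min\left(1,\frac{\epsilon^{n+1}_\rho-\Gamma_j}{-\lambda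 F_{j+\frac12}}\right)\right)$; (iii) if $F_{j-\frac12}<0$ and $F_{j+\frac12}\le0$: $\left(\min\left(1,\frac{\epsilon^{n+1}_\rho-\Gamma_j}{\lambda F_{j-\frac12}}\right),1\right)$; (iv) if $F_{j-\frac12}<0$ and $F_{j+\frac12}>0$: $(1,1)$ if $\lambda F_{j-\frac12}-\lambda F_{j+\frac12}\ge\epsilon^{n+1}_\rho-\Gamma_j$, and otherwise both bounds equal $\frac{\epsilon^{n+1}_\rho-\Gamma_j}{\lambda F_{j-\frac12}-\lambda F_{j+\frac12}}$. With these bounds, the density (first component) of $q^{n+1}_j(\overrightarrow\theta)$ is at least $\epsilon^{n+1}_\rho$ for all $\overrightarrow\theta\in S_{\rho,I_j}$. *)

theory Defs
  imports "HOL-Analysis.Analysis"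
begin

text \<open>State vectors q = (rho, rho u_x, rho u_y, rho u_z, E, B_x, B_y, B_z) are
  elements of real^8, with components indexed 0..7 in this order.\<close>

definition mhd_pressure :: "real \<Rightarrow> real^8 \<Rightarrow> real" where
  "mhd_pressure \<gamma> q = (\<gamma> - 1) * (q$4 - ((q$1)\<^sup>2 + (q$2)\<^sup>2 + (q$3)\<^sup>2) / (2 * q$0)
       - ((q$5)\<^sup>2 + (q$6)\<^sup>2 + (q$7)\<^sup>2) / 2)"

text \<open>Limited flux and updated state q^{n+1}_j(theta), theta = (theta_{j-1/2}, theta_{j+1/2}).
  Arguments: lambda, q^n_j, F^rk_{j-1/2}, F^rk_{j+1/2}, f_{j-1/2}, f_{j+1/2}, theta.\<close>

definition limited_flux :: "real \<Rightarrow> real^8 \<Rightarrow> real^8 \<Rightarrow> real^8" where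
  "limited_flux \<theta> Frk f = \<theta> *\<^sub>R (Frk - f) + f"

definition q_update :: "real \<Rightarrow> real^8 \<Rightarrow> real^8 \<Rightarrow> real^8 \<Rightarrow> real^8 \<Rightarrow> real^8
    \<Rightarrow> real \<times> real \<Rightarrow> real^8" where
  "q_update lam qn Fm Fp fm fp \<theta> =
     qn - lam *\<^sub>R (limited_flux (snd \<theta>) Fp fp - limited_flux (fst \<theta>) Fm fm)"

text \<open>Gamma_j: density of the first-order Lax--Friedrichs update.\<close>
definition Gamma_LF :: "real \<Rightarrow> real^8 \<Rightarrow> real^8 \<Rightarrow> real^8 \<Rightarrow> real" where
  "Gamma_LF lam qn fm fp = qn$0 - lam * (fp$0 - fm$0)"

definition density_bounds :: "real \<Rightarrow> real \<Rightarrow> real \<Rightarrow> real \<Rightarrow> real \<Rightarrow> real \<times> real" where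
  "density_bounds lam eps \<Gamma> Fm Fp =
    (if Fm \<ge> 0 \<and> Fp \<le> 0 then (1, 1)
     else if Fm \<ge> 0 \<and> Fp > 0 then (1, min 1 ((eps - \<Gamma>) / (- lam * Fp)))
     else if Fm < 0 \<and> Fp \<le> 0 then (min 1 ((eps - \<Gamma>) / (lam * Fm)), 1)
     else if lam * Fm - lam * Fp \<ge> eps - \<Gamma> then (1, 1)
     else ((eps - \<Gamma>) / (lam * Fm - lam * Fp), (eps - \<Gamma>) / (lam * Fm - lam * Fp)))"

definition S_rho :: "real \<Rightarrow> real \<Rightarrow> real^8 \<Rightarrow> real^8 \<Rightarrow> real^8 \<Rightarrow> real^8 \<Rightarrow> real^8
    \<Rightarrow> (real \<times> real) set" where
  "S_rho lam eps qn Fm Fp fm fp =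
     (let \<Gamma> = Gamma_LF lam qn fm fp;
          (Lm, Lp) = density_bounds lam eps \<Gamma> (Fm$0 - fm$0) (Fp$0 - fp$0)
      in {0..Lm} \<times> {0..Lp})"

end

theory Submission
  imports Defs
begin

lemma sq_ratio_convex:
  fixes m1 m2 r1 r2 a :: real
  assumes "r1 > 0" "r2 > 0" "0 \<le> a" "a \<le> 1"
  shows "(a*m1 + (1-a)*m2)\<^sup>2 / (a*r1 + (1-a)*r2) \<le> a * (m1\<^sup>2/r1) + (1-a) * (m2\<^sup>2/r2)"
proof -
  let ?b = "1 - a"
  have rp: "a*r1 + ?b*r2 > 0"
  proof (cases "a = 0")
    case True then show ?thesis using assms by simp
  next
    case False then have "a*r1 > 0" using assms by simp
    moreover have "?b*r2 \<ge> 0" using assms by simp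
    ultimately show ?thesis by linarith
  qed
  have key: "a * (m1\<^sup>2/r1) + ?b * (m2\<^sup>2/r2) - (a*m1 + ?b*m2)\<^sup>2 / (a*r1 + ?b*r2)
      = a * ?b * (m1*r2 - m2*r1)\<^sup>2 / (r1*r2*(a*r1 + ?b*r2))"
    using assms rp by (simp add: field_simps power2_eq_square)
  have "a * ?b * (m1*r2 - m2*r1)\<^sup>2 / (r1*r2*(a*r1 + ?b*r2)) \<ge> 0"
    using assms rp by (intro divide_nonneg_pos mult_nonneg_nonneg) auto
  with key show ?thesis by linarith
qed

lemma sq_convex:
  fixes x y a :: real
  assumes "0 \<le> a" "a \<le> 1"
  shows "(a*x + (1-a)*y)\<^sup>2 \<le> a*x\<^sup>2 + (1-a)*y\<^sup>2"
proof -
  have "a*x\<^sup>2 + (1-a)*y\<^sup>2 - (a*x + (1-a)*y)\<^sup>2 = a*(1-a)*(x-y)\<^sup>2"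
    by (simp add: algebra_simps power2_eq_square)
  moreover have "a*(1-a)*(x-y)\<^sup>2 \<ge> 0" using assms by simp
  ultimately show ?thesis by linarith
qed

lemma lin_helper:
  fixes X1 X2 X3 Y1 Y2 Y3 W5 W6 W7 V5 V6 V7 A :: real
  assumes "X1 \<le> Y1" "X2 \<le> Y2" "X3 \<le> Y3" "W5 \<le> V5" "W6 \<le> V6" "W7 \<le> V7"
  shows "A - (Y1+Y2+Y3)/2 - (V5+V6+V7)/2 \<le> A - (X1+X2+X3)/2 - (W5+W6+W7)/2"
proof -
  have "(X1+X2+X3)/2 \<le> (Y1+Y2+Y3)/2" using assms by (intro divide_right_mono) auto
  moreover have "(W5+W6+W7)/2 \<le> (V5+V6+V7)/2" using assms by (intro divide_right_mono) auto
  ultimately show ?thesis by linarith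
qed

lemma pressure_concave:
  fixes q1 q2 :: "real^8" and a \<gamma> :: real
  assumes "\<gamma> > 1" "q1$0 > 0" "q2$0 > 0" "0 \<le> a" "a \<le> 1"
  shows "mhd_pressure \<gamma> (a *\<^sub>R q1 + (1-a) *\<^sub>R q2) \<ge> a * mhd_pressure \<gamma> q1 + (1-a) * mhd_pressure \<gamma> q2"
proof -
  define P where "P q = q$4 - ((q$1)\<^sup>2 + (q$2)\<^sup>2 + (q$3)\<^sup>2) / (2 * q$0)
       - ((q$5)\<^sup>2 + (q$6)\<^sup>2 + (q$7)\<^sup>2) / 2" for q :: "real^8"
  have h1: "(a*q1$i + (1-a)*q2$i)\<^sup>2 / (a*q1$0 + (1-a)*q2$0) \<le> a * ((q1$i)\<^sup>2/q1$0) + (1-a) * ((q2$i)\<^sup>2/q2$0)" for i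
    using sq_ratio_convex assms by blast
  have h2: "(a*q1$i + (1-a)*q2$i)\<^sup>2 \<le> a*(q1$i)\<^sup>2 + (1-a)*(q2$i)\<^sup>2" for i
    using sq_convex assms by blast
  have eq: "P (a *\<^sub>R q1 + (1-a) *\<^sub>R q2) = (a*q1$4 + (1-a)*q2$4)
      - ((a*q1$1 + (1-a)*q2$1)\<^sup>2 / (a*q1$0 + (1-a)*q2$0)
        + (a*q1$2 + (1-a)*q2$2)\<^sup>2 / (a*q1$0 + (1-a)*q2$0)
        + (a*q1$3 + (1-a)*q2$3)\<^sup>2 / (a*q1$0 + (1-a)*q2$0)) / 2
      - ((a*q1$5 + (1-a)*q2$5)\<^sup>2 + (a*q1$6 + (1-a)*q2$6)\<^sup>2 + (a*q1$7 + (1-a)*q2$7)\<^sup>2) / 2"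
    unfolding P_def by (simp add: add_divide_distrib mult.commute)
  have e1: "P q1 = q1$4 - ((q1$1)\<^sup>2/q1$0 + (q1$2)\<^sup>2/q1$0 + (q1$3)\<^sup>2/q1$0)/2
       - ((q1$5)\<^sup>2 + (q1$6)\<^sup>2 + (q1$7)\<^sup>2) / 2"
    unfolding P_def by (simp add: add_divide_distrib)
  have e2: "P q2 = q2$4 - ((q2$1)\<^sup>2/q2$0 + (q2$2)\<^sup>2/q2$0 + (q2$3)\<^sup>2/q2$0)/2
       - ((q2$5)\<^sup>2 + (q2$6)\<^sup>2 + (q2$7)\<^sup>2) / 2"
    unfolding P_def by (simp add: add_divide_distrib)
  have "P (a *\<^sub>R q1 + (1-a) *\<^sub>R q2) \<ge> a * P q1 + (1-a) * P q2"
  proof -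
    have c: "a * P q1 + (1-a) * P q2 = (a*q1$4 + (1-a)*q2$4)
      - ((a * ((q1$1)\<^sup>2/q1$0) + (1-a) * ((q2$1)\<^sup>2/q2$0))
       + (a * ((q1$2)\<^sup>2/q1$0) + (1-a) * ((q2$2)\<^sup>2/q2$0))
       + (a * ((q1$3)\<^sup>2/q1$0) + (1-a) * ((q2$3)\<^sup>2/q2$0))) / 2
      - ((a*(q1$5)\<^sup>2 + (1-a)*(q2$5)\<^sup>2) + (a*(q1$6)\<^sup>2 + (1-a)*(q2$6)\<^sup>2)
       + (a*(q1$7)\<^sup>2 + (1-a)*(q2$7)\<^sup>2)) / 2"
      unfolding e1 e2 by (simp add: algebra_simps add_divide_distrib diff_divide_distrib)
    show ?thesis unfolding eq c
      by (rule lin_helper[OF h1[of 1] h1[of 2] h1[of 3] h2[of 5] h2[of 6] h2[of 7]])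
  qed
  then have "(\<gamma>-1) * P (a *\<^sub>R q1 + (1-a) *\<^sub>R q2) \<ge> (\<gamma>-1) * (a * P q1 + (1-a) * P q2)"
    using assms(1) by (intro mult_left_mono) auto
  moreover have mp: "mhd_pressure \<gamma> q = (\<gamma>-1) * P q" for q
    unfolding mhd_pressure_def P_def by simp
  ultimately show ?thesis unfolding mp by (simp add: algebra_simps)
qed

lemma q_affine:
  "q_update lam qn Fm Fp fm fp (a *\<^sub>R t1 + (1 - a) *\<^sub>R t2)
   = a *\<^sub>R q_update lam qn Fm Fp fm fp t1 + (1-a) *\<^sub>R q_update lam qn Fm Fp fm fp t2"
  unfolding q_update_def limited_flux_def
  by (simp add: vec_eq_iff algebra_simps)

lemma density_lb:
  fixes lam eps :: real
  assumes "lam > 0" "Gamma_LF lam qn fm fp \<ge> eps"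
    and "\<theta> \<in> S_rho lam eps qn Fm Fp fm fp"
  shows "(q_update lam qn Fm Fp fm fp \<theta>)$0 \<ge> eps"
proof -
  obtain tm tp where th: "\<theta> = (tm, tp)" by (cases \<theta>)
  define G where "G = Gamma_LF lam qn fm fp"
  define A where "A = Fm$0 - fm$0"
  define B where "B = Fp$0 - fp$0"
  have rho: "(q_update lam qn Fm Fp fm fp \<theta>)$0 = G + lam*tm*A - lam*tp*B"
    unfolding th q_update_def limited_flux_def G_def A_def B_def Gamma_LF_def
    by (simp add: algebra_simps)
  obtain Lm Lp where L: "density_bounds lam eps G A B = (Lm, Lp)" by (cases "density_bounds lam eps G A B")
  have mem: "0 \<le> tm" "tm \<le> Lm" "0 \<le> tp" "tp \<le> Lp"
    using assms(3) unfolding S_rho_def th Let_def G_def[symmetric] A_def[symmetric] B_def[symmetric] L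
    by auto
  have G: "G \<ge> eps" using assms(2) G_def by simp
  show ?thesis unfolding rho
  proof (cases "A \<ge> 0 \<and> B \<le> 0")
    case True
    then have "Lm = 1" "Lp = 1" using L unfolding density_bounds_def by auto
    have "lam*tm*A \<ge> 0" using True mem assms(1) by simp
    moreover have "lam*tp*B \<le> 0" using True mem assms(1)
      by (simp add: mult_nonneg_nonpos)
    ultimately show "eps \<le> G + lam*tm*A - lam*tp*B" using G by linarith
  next
    case c1: False
    show "eps \<le> G + lam*tm*A - lam*tp*B"
    proof (cases "A \<ge> 0 \<and> B > 0")
      case True
      then have "Lp = min 1 ((eps - G) / (- lam * B))" using L c1 unfolding density_bounds_def by auto
      moreover have "lam * B > 0" using True assms(1) by simp
      ultimately have "tp * (lam*B) \<le> G - eps" using mem by (simp add: divide_simps)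
      moreover have "lam*tm*A \<ge> 0" using True mem assms(1) by simp
      ultimately show ?thesis by (simp add: algebra_simps)
    next
      case c2: False
      show ?thesis
      proof (cases "A < 0 \<and> B \<le> 0")
        case True
        then have "Lm = min 1 ((eps - G) / (lam * A))" using L c1 c2 unfolding density_bounds_def by auto
        then have "tm \<le> (eps - G) / (lam * A)" using mem by simp
        moreover have "lam * A < 0" using True assms(1) by (simp add: mult_pos_neg)
        ultimately have "tm * (lam*A) \<ge> eps - G" by (simp add: neg_le_divide_eq)
        moreover have "lam*tp*B \<le> 0" using True mem assms(1)
          by (simp add: mult_nonneg_nonpos)
        ultimately show ?thesis by (simp add: algebra_simps)
      next
        case c3: False
        have AB: "A < 0" "B > 0" using c1 c2 c3 by auto
        have lA: "lam*A < 0" using AB assms(1) by (simp add: mult_pos_neg)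
        have lB: "lam*B > 0" using AB assms(1) by simp
        show ?thesis
        proof (cases "lam * A - lam * B \<ge> eps - G")
          case True
          then have "Lm = 1" "Lp = 1" using L c1 c2 c3 unfolding density_bounds_def by auto
          then have "tm \<le> 1" "tp \<le> 1" using mem by auto
          have "tm * (lam*A) \<ge> lam*A" using \<open>tm \<le> 1\<close> lA
            by (metis mult_le_cancel_right mult_1 mult.commute less_irrefl mult_less_cancel_right
                linorder_not_le not_less_iff_gr_or_eq)
          moreover have "tp * (lam*B) \<le> lam*B" using mult_right_mono[OF \<open>tp \<le> 1\<close>, of "lam*B"] lB by simp
          ultimately show ?thesis using True by (simp add: algebra_simps)
        next
          case False
          define c where "c = (eps - G) / (lam * A - lam * B)"
          have "Lm = c" "Lp = c" using L c1 c2 c3 False unfolding density_bounds_def c_def by auto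
          have neg: "lam*A - lam*B < 0" using lA lB by simp
          have cd: "c * (lam*A - lam*B) = eps - G" unfolding c_def using neg by (metis less_irrefl nonzero_eq_divide_eq)
          have "tm * (lam*A) \<ge> c * (lam*A)" using mem \<open>Lm = c\<close> lA
            by (simp add: mult_right_mono_neg)
          moreover have "tp * (lam*B) \<le> c * (lam*B)" using mem \<open>Lp = c\<close> lB
            by (simp add: mult_right_mono)
          ultimately show ?thesis using cd by (simp add: algebra_simps)
        qed
      qed
    qed
  qed
qed

theorem lemma1:
  fixes \<gamma> lam eps \<alpha> :: real and qn Fm Fp fm fp :: "real^8" and \<theta>1 \<theta>2 :: "real \<times> real"
  assumes "\<gamma> > 1" and "lam > 0" and "eps > 0"
    and "Gamma_LF lam qn fm fp \<ge> eps"
    and "\<alpha> \<in> {0..1}"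
    and "\<theta>1 \<in> S_rho lam eps qn Fm Fp fm fp" and "\<theta>2 \<in> S_rho lam eps qn Fm Fp fm fp"
  shows "mhd_pressure \<gamma> (q_update lam qn Fm Fp fm fp (\<alpha> *\<^sub>R \<theta>1 + (1 - \<alpha>) *\<^sub>R \<theta>2))
     \<ge> \<alpha> * mhd_pressure \<gamma> (q_update lam qn Fm Fp fm fp \<theta>1)
       + (1 - \<alpha>) * mhd_pressure \<gamma> (q_update lam qn Fm Fp fm fp \<theta>2)"
proof -
  have p1: "(q_update lam qn Fm Fp fm fp \<theta>1)$0 > 0"
    using density_lb[OF assms(2) assms(4) assms(6)] assms(3) by linarith
  have p2: "(q_update lam qn Fm Fp fm fp \<theta>2)$0 > 0"
    using density_lb[OF assms(2) assms(4) assms(7)] assms(3) by linarith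
  show ?thesis unfolding q_affine
    using pressure_concave[OF assms(1) p1 p2] assms(5) by auto
qed

end
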